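(* For any $\alpha<1/2$ there exist constants $0<c\le C<\infty$ such that for all $n\ge1$, \[c\,n^{-1/2}\le \mathbb{P}\big(Z_i\ge i^\alpha\ \forall i=1,\ldots,n\big)\le C\,n^{-1/2}.\]
   Context: $X_1,X_2,\ldots$ are i.i.d. with $\mathbb{P}(X_i=1)=\mathbb{P}(X_i=-1)=1/2$ and $Z_i=\sum_{k=1}^i\prod_{j=1}^kX_j$. *)

theory Defs
  imports "HOL-Probability.Probability"
begin

definition Zsum :: "(nat \<Rightarrow> 'a \<Rightarrow> real) \<Rightarrow> nat \<Rightarrow> 'a \<Rightarrow> real" where
  "Zsum X i \<omega> = (\<Sum>k=1..i. \<Prod>j=1..k. X j \<omega>)"

end

theory Submission
  imports Defs
begin



fun KE :: "(nat \<Rightarrow> int \<Rightarrow> bool) \<Rightarrow> (int \<Rightarrow> real) \<Rightarrow> nat \<Rightarrow> nat \<Rightarrow> int \<Rightarrow> real" where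
  "KE A g 0 t x = (if A t x then g x else 0)"
| "KE A g (Suc m) t x = (if A t x then (KE A g m (Suc t) (x+1) + KE A g m (Suc t) (x-1))/2 else 0)"

lemma KE_nonneg: "(\<And>t x. A t x \<Longrightarrow> g x \<ge> 0) \<Longrightarrow> KE A g m t x \<ge> 0"
  by (induction m arbitrary: t x) auto

lemma KE_mono_A:
  assumes "\<And>t x. A t x \<Longrightarrow> B t x" "\<And>t x. B t x \<Longrightarrow> g x \<ge> 0"
  shows "KE A g m t x \<le> KE B g m t x"
  using assms
proof (induction m arbitrary: t x)
  case 0 then show ?case by auto
next
  case (Suc m)
  then show ?case using KE_nonneg[of B g] by (auto simp: add_mono)
qed

lemma KE_mono_g:
  assumes "\<And>t x. A t x \<Longrightarrow> g x \<le> h x"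
  shows "KE A g m t x \<le> KE A h m t x"
  using assms
proof (induction m arbitrary: t x)
  case 0 then show ?case by auto
next
  case (Suc m)
  then show ?case by (auto simp: add_mono divide_right_mono)
qed

lemma KE_add: "KE A (\<lambda>x. g x + h x) m t x = KE A g m t x + KE A h m t x"
  by (induction m arbitrary: t x) (auto simp: field_simps)

lemma KE_cmult: "KE A (\<lambda>x. c * g x) m t x = c * KE A g m t x"
  by (induction m arbitrary: t x) (auto simp: field_simps)

definition Pos :: "nat \<Rightarrow> int \<Rightarrow> bool" where "Pos t x = (x \<ge> 1)"
lemma Pos_I[simp]: "1 \<le> x \<Longrightarrow> Pos t x" by (simp add: Pos_def)
lemma Pos_E[simp]: "x < 1 \<Longrightarrow> \<not> Pos t x" by (simp add: Pos_def)
lemma Pos_D: "Pos t x \<Longrightarrow> 1 \<le> x" by (simp add: Pos_def)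

lemma KE_Pos_t: "KE Pos g m t x = KE Pos g m t' x"
proof (induction m arbitrary: t t' x)
  case 0 show ?case by (cases "1 \<le> x") simp_all
next
  case (Suc m)
  have "KE Pos g m (Suc t) y = KE Pos g m (Suc t') y" for y using Suc.IH by blast
  then show ?case by (cases "1 \<le> x") simp_all
qed

lemma KE_Pos_id: "x \<ge> 0 \<Longrightarrow> KE Pos real_of_int m t x = x"
proof (induction m arbitrary: t x)
  case 0 then show ?case by (cases "1 \<le> x") auto
next
  case (Suc m)
  show ?case
  proof (cases "1 \<le> x")
    case True
    then show ?thesis using Suc.IH[of "x+1"] Suc.IH[of "x-1"] by (simp add: add_mono divide_right_mono)
  next
    case False
    then have "x = 0" using Suc.prems by simp
    then show ?thesis by simp
  qed
qed

lemma KE_Pos_cube: "x \<ge> 0 \<Longrightarrow> KE Pos (\<lambda>x. real_of_int x ^ 3) m t x \<le> real_of_int x ^ 3 + 3 * m * x"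
proof (induction m arbitrary: t x)
  case 0 then show ?case by (cases "1 \<le> x") auto
next
  case (Suc m)
  show ?case
  proof (cases "1 \<le> x")
    case True
    have "KE Pos (\<lambda>x. real_of_int x ^ 3) (Suc m) t x \<le>
       ((real_of_int (x+1) ^ 3 + 3 * m * (x+1)) + (real_of_int (x-1) ^ 3 + 3 * m * (x-1)))/2"
      using True Suc.IH[of "x+1" "Suc t"] Suc.IH[of "x-1" "Suc t"] by (simp add: add_mono divide_right_mono)
    also have "\<dots> = real_of_int x ^ 3 + 3 * real (Suc m) * x" by (simp add: field_simps power3_eq_cube)
    finally show ?thesis .
  next
    case False
    then have "x = 0" using Suc.prems by simp
    then show ?thesis by simp
  qed
qed

definition pb :: "nat \<Rightarrow> int \<Rightarrow> real" where
  "pb t j = (if even (j + int t) \<and> \<bar>j\<bar> \<le> int t then real (t choose nat ((j + int t) div 2)) / 2^t else 0)"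

lemma pb_0: "pb 0 j = (if j = 0 then 1 else 0)"
  by (auto simp: pb_def)

lemma pb_rec: "pb (Suc t) j = (pb t (j-1) + pb t (j+1))/2"
proof (cases "even (j + int (Suc t)) \<and> \<bar>j\<bar> \<le> int (Suc t)")
  case False
  then show ?thesis by (auto simp: pb_def)
next
  case True
  then obtain u where u: "j = 2 * int u - int t - 1" "u \<le> Suc t"
  proof -
    have "even (j + int (Suc t))" using True by blast
    then obtain v where v: "j + int (Suc t) = 2 * v" by (metis evenE)
    show ?thesis using True v by (intro that[of "nat v"]) auto
  qed
  show ?thesis
  proof (cases "u = 0")
    case True
    then show ?thesis using u by (simp add: pb_def)
  next
    case False
    then obtain w where w: "u = Suc w" by (cases u) auto
    have e1: "nat ((j - 1 + int t) div 2) = w" using u w by simp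
    have e2: "nat ((j + 1 + int t) div 2) = u" using u w by simp
    have e3: "nat ((j + int (Suc t)) div 2) = u" using u w by simp
    show ?thesis
    proof (cases "u = Suc t")
      case True
      then show ?thesis using u w e1 e3 by (simp add: pb_def)
    next
      case False
      then have "u \<le> t" using u by simp
      then have "\<bar>j\<bar> \<le> int t" "\<bar>j - 1\<bar> \<le> int t" "\<bar>j+1\<bar> \<le> int t" using u w by auto
      have jv: "j = 2 * int w + 1 - int t" using u w by simp
      have p1: "pb (Suc t) j = real (Suc t choose u) / 2^(Suc t)"
        unfolding pb_def using e3 \<open>\<bar>j\<bar> \<le> int t\<close> jv by simp
      have p2: "pb t (j-1) = real (t choose w) / 2^t"
        unfolding pb_def using e1 \<open>\<bar>j-1\<bar> \<le> int t\<close> jv by simp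
      have p3: "pb t (j+1) = real (t choose u) / 2^t"
        unfolding pb_def using e2 \<open>\<bar>j+1\<bar> \<le> int t\<close> jv by simp
      show ?thesis unfolding p1 p2 p3 w by (simp add: field_simps)
    qed
  qed
qed

lemma sum_shift_int: "(\<Sum>j\<in>{a..b}. f (j + c)) = (\<Sum>j\<in>{a+c..b+(c::int)}. f j)"
  by (rule sum.reindex_bij_witness[of _ "\<lambda>j. j - c" "\<lambda>j. j + c"]) auto

lemma sum_top2_int: "a \<le> b + 1 \<Longrightarrow> (\<Sum>j\<in>{a..b+2}. f j) = (\<Sum>j\<in>{a..(b::int)}. f j) + f (b+1) + f (b+2)"
proof -
  assume "a \<le> b + 1"
  have "{a..b+2} = insert (b+2) (insert (b+1) {a..b})" using \<open>a \<le> b + 1\<close> by auto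
  then show ?thesis by (simp add: ac_simps)
qed

lemma sum_shift_int_minus: "(\<Sum>j\<in>{a..b}. f (j - c)) = (\<Sum>j\<in>{a-c..b-(c::int)}. f j)"
  by (rule sum.reindex_bij_witness[of _ "\<lambda>j. j + c" "\<lambda>j. j - c"]) auto

definition Q :: "nat \<Rightarrow> int \<Rightarrow> real" where "Q m x = KE Pos (\<lambda>_. 1) m 0 x"

lemma KE_Pos_formula: "x \<ge> 0 \<Longrightarrow> KE Pos (\<lambda>_. 1) m t x = (\<Sum>j\<in>{-x..x-1}. pb m j)"
proof (induction m arbitrary: t x)
  case 0
  show ?case
  proof (cases "1 \<le> x")
    case True
    have "(\<Sum>j\<in>{-x..x-1}. pb 0 j) = (\<Sum>j\<in>{-x..x-1}. if j = 0 then 1 else 0)" by (simp add: pb_0)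
    also have "\<dots> = 1" using True by (simp add: sum.delta)
    finally show ?thesis using True by simp
  next
    case False
    then show ?thesis using 0 by simp
  qed
next
  case (Suc m)
  show ?case
  proof (cases "1 \<le> x")
    case False
    then show ?thesis using Suc by simp
  next
    case True
    have h1: "KE Pos (\<lambda>_. 1) m (Suc t) (x+1) = (\<Sum>j\<in>{-x-1..x}. pb m j)"
    proof -
      have "{-(x+1)..(x+1)-1} = {-x-1..x}" by auto
      then show ?thesis using Suc.IH[of "x+1"] True by simp
    qed
    have h2: "KE Pos (\<lambda>_. 1) m (Suc t) (x-1) = (\<Sum>j\<in>{-x+1..x-2}. pb m j)"
    proof -
      have "{-(x-1)..(x-1)-1} = {-x+1..x-2}" by auto
      then show ?thesis using Suc.IH[of "x-1"] True by simp
    qed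
    have s1: "(\<Sum>j\<in>{-x..x-1}. pb m (j - 1)) = (\<Sum>j\<in>{-x-1..x-2}. pb m j)"
      by (subst sum_shift_int_minus, rule sum.cong) auto
    have s2: "(\<Sum>j\<in>{-x..x-1}. pb m (j + 1)) = (\<Sum>j\<in>{-x+1..x}. pb m j)"
      by (subst sum_shift_int, rule sum.cong) auto
    have t1: "(\<Sum>j\<in>{-x-1..x}. pb m j) = (\<Sum>j\<in>{-x-1..x-2}. pb m j) + pb m (x-1) + pb m x"
      using sum_top2_int[of "-x-1" "x-2" "pb m"] True by simp
    have t2: "(\<Sum>j\<in>{-x+1..x}. pb m j) = (\<Sum>j\<in>{-x+1..x-2}. pb m j) + pb m (x-1) + pb m x"
      using sum_top2_int[of "-x+1" "x-2" "pb m"] True by simp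
    have "(\<Sum>j\<in>{-x..x-1}. pb (Suc m) j) = ((\<Sum>j\<in>{-x..x-1}. pb m (j - 1)) + (\<Sum>j\<in>{-x..x-1}. pb m (j + 1)))/2"
      by (simp add: pb_rec sum.distrib flip: sum_divide_distrib)
    also have "\<dots> = (KE Pos (\<lambda>_. 1) m (Suc t) (x+1) + KE Pos (\<lambda>_. 1) m (Suc t) (x-1))/2"
      using s1 s2 t1 t2 h1 h2 by simp
    finally show ?thesis using True by simp
  qed
qed

lemma aux_cb: "(b::real) * (m+1) * (m+1) = a * (2*m+1) * (2*m+2) \<Longrightarrow> m \<ge> 0 \<Longrightarrow> b = a * (2*(2*m+1)) / (m+1)"
proof -
  assume h: "b * (m+1) * (m+1) = a * (2*m+1) * (2*m+2)" and "m \<ge> 0"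
  have "b * (m+1) * (m+1) = (a * (2*(2*m+1))) * (m+1)" using h by (simp add: algebra_simps)
  then have "b * (m+1) = a * (2*(2*m+1))" using \<open>m \<ge> 0\<close> by simp
  then show "b = a * (2*(2*m+1)) / (m+1)" using \<open>m \<ge> 0\<close> by (simp add: field_simps)
qed

lemma central_binom_sq: "real ((2*m) choose m)^2 * (2*real m+1) \<le> 16^m"
proof (induction m)
  case 0 then show ?case by simp
next
  case (Suc m)
  have r: "real ((2*Suc m) choose Suc m) = real ((2*m) choose m) * (2*(2*real m+1)) / (real m+1)"
  proof -
    have a: "Suc (Suc (2*m)) * (Suc (2*m) choose m) = (Suc (Suc (2*m)) choose Suc m) * Suc m"
      by (rule Suc_times_binomial_eq)
    have b: "Suc (2*m) * ((2*m) choose m) = (Suc (2*m) choose Suc m) * Suc m"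
      by (rule Suc_times_binomial_eq)
    have c: "Suc (2*m) choose Suc m = Suc (2*m) choose m"
      using binomial_symmetric[of m "Suc (2*m)"] by simp
    have e: "2*Suc m = Suc (Suc (2*m))" by simp
    have "((2*Suc m) choose Suc m) * (Suc m) * (Suc m) = Suc (Suc (2*m)) * (Suc (2*m) choose m) * Suc m"
      by (simp only: e a)
    also have "\<dots> = Suc (Suc (2*m)) * ((Suc (2*m) choose Suc m) * Suc m)" using c by (simp only: mult.assoc)
    also have "\<dots> = Suc (Suc (2*m)) * (Suc (2*m) * ((2*m) choose m))" using b by simp
    finally have "((2*Suc m) choose Suc m) * (Suc m) * (Suc m) = ((2*m) choose m) * (2*m+1) * (2*m+2)"
      by (simp add: algebra_simps)
    then have "real (((2*Suc m) choose Suc m) * (Suc m) * (Suc m)) = real (((2*m) choose m) * (2*m+1) * (2*m+2))"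
      by (simp only:)
    then have "real ((2*Suc m) choose Suc m) * (real m+1) * (real m+1) = real ((2*m) choose m) * (2*real m+1) * (2*real m+2)"
      by (simp only: of_nat_mult of_nat_Suc of_nat_add of_nat_1 add.commute) (simp add: add.commute)
    moreover note aux_cb[of "real ((2*Suc m) choose Suc m)" "real m" "real ((2*m) choose m)"]
    ultimately show ?thesis by (meson of_nat_0_le_iff)
  qed
  have "real ((2*Suc m) choose Suc m)^2 * (2*real (Suc m)+1) = real ((2*m) choose m)^2 * (2*real m+1) * (4*(2*real m+1)*(2*real m+3)/((real m+1)^2))"
    unfolding r by (simp add: field_simps power2_eq_square)
  also have "\<dots> \<le> 16^m * 16"
  proof -
    have "(real m+1)^2 > 0" by simp
    moreover have "4*(2*real m+1)*(2*m+3) \<le> 16 * (real m+1)^2" by (simp add: power2_eq_square algebra_simps)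
    ultimately have yb: "4*(2*real m+1)*(2*real m+3)/((real m+1)^2) \<le> 16" by (simp add: divide_le_eq add.commute)
    show ?thesis by (rule mult_mono[OF Suc.IH yb]) auto
  qed
  finally show ?case by simp
qed




lemma aux_nat: "2 * s * x = y * (s::nat) \<Longrightarrow> 0 < s \<Longrightarrow> y = 2 * x"
proof -
  assume h: "2 * s * x = y * s" and s: "0 < s"
  have "s * (2 * x) = s * y" using h by (simp add: ac_simps)
  then show "y = 2 * x" using s by simp
qed

lemma aux_sq: "0 \<le> (c::real) \<Longrightarrow> 0 < u \<Longrightarrow> c^2 * u \<le> 1 \<Longrightarrow> c \<le> 1 / sqrt u"
proof -
  assume c: "0 \<le> c" and u: "0 < u" and h: "c^2 * u \<le> 1"
  have "c * sqrt u = sqrt (c^2 * u)" using c by (simp add: real_sqrt_mult)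
  also have "\<dots> \<le> 1" using h by simp
  finally have "c * sqrt u \<le> 1" .
  then show ?thesis using u by (simp add: field_simps)
qed

lemma binom_odd_rel: "(2*Suc m) choose Suc m = 2 * ((Suc (2*m)) choose m)"
proof -
  have a: "Suc (Suc (2*m)) * (Suc (2*m) choose m) = (Suc (Suc (2*m)) choose Suc m) * Suc m"
    by (rule Suc_times_binomial_eq)
  have e: "2*Suc m = Suc (Suc (2*m))" by simp
  have "Suc (Suc (2*m)) = 2 * Suc m" by simp
  then have "2 * Suc m * (Suc (2*m) choose m) = ((2*Suc m) choose Suc m) * Suc m" using a e by simp
  then show ?thesis by (rule aux_nat) simp
qed

lemma central_bound: "real (t choose (t div 2))^2 * (real t + 1) \<le> 4^t"
proof (cases "even t")
  case True
  then obtain m where m: "t = 2*m" by (auto elim: evenE)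
  have "(4::real)^t = 16^m" by (simp add: m power_mult)
  then show ?thesis using central_binom_sq[of m] m by simp
next
  case False
  then obtain m where m: "t = Suc (2*m)" by (metis oddE Suc_eq_plus1)
  have dv: "t div 2 = m" using m by simp
  have h: "real ((2*Suc m) choose Suc m)^2 * (2*real (Suc m)+1) \<le> 16^(Suc m)" by (rule central_binom_sq)
  have "real ((2*Suc m) choose Suc m) = 2 * real (t choose m)" using binom_odd_rel[of m] m by simp
  then have "4 * real (t choose m)^2 * (2*real m+3) \<le> 16 * 16^m" using h by (simp add: power2_eq_square algebra_simps)
  moreover have "real (t choose m)^2 * (real t + 1) \<le> real (t choose m)^2 * (2*real m+3)" using m by (intro mult_left_mono) auto
  moreover have "(4::real)^t = 4 * 16^m" using m by (simp add: power_mult)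
  ultimately show ?thesis using dv by simp
qed

lemma pb_le: "pb t j \<le> 1 / sqrt (real t + 1)"
proof -
  have "pb t j \<le> real (t choose (t div 2)) / 2^t"
    unfolding pb_def using binomial_maximum[of t] by (auto simp: divide_right_mono)
  also have "\<dots> \<le> 1 / sqrt (real t + 1)"
  proof -
    have h4: "(4::real)^t = 2^t * 2^t" by (simp flip: power_mult_distrib)
    have "(real (t choose (t div 2)) / 2^t)^2 * (real t + 1) = real (t choose (t div 2))^2 * (real t + 1) / 4^t"
      by (simp add: power_divide h4 power2_eq_square)
    also have "\<dots> \<le> 1" using central_bound[of t] by simp
    finally have "(real (t choose (t div 2)) / 2^t)^2 * (real t + 1) \<le> 1" .
    then show ?thesis by (intro aux_sq) auto
  qed
  finally show ?thesis .
qed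

lemma KE_Pos_bound: "x \<ge> 0 \<Longrightarrow> KE Pos (\<lambda>_. 1) m t x \<le> 2 * x / sqrt (real m + 1)"
proof -
  assume x: "x \<ge> 0"
  have "KE Pos (\<lambda>_. 1) m t x = (\<Sum>j\<in>{-x..x-1}. pb m j)" using KE_Pos_formula x by blast
  also have "\<dots> \<le> (\<Sum>j\<in>{-x..x-1}. 1 / sqrt (real m + 1))" by (intro sum_mono pb_le)
  also have "\<dots> = 2 * x / sqrt (real m + 1)" using x by simp
  finally show ?thesis by simp
qed




definition Gb :: "real \<Rightarrow> nat \<Rightarrow> int \<Rightarrow> bool" where
  "Gb \<beta> t x = (1 \<le> x \<and> real t powr \<beta> \<le> real_of_int x)"

definition ak :: "nat \<Rightarrow> real \<Rightarrow> nat \<Rightarrow> real" where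
  "ak L \<beta> k = real (L * 2^(Suc k)) powr \<beta>"

definition psi :: "nat \<Rightarrow> real \<Rightarrow> nat \<Rightarrow> nat \<Rightarrow> int \<Rightarrow> real" where
  "psi L \<beta> k t x = (if t < L * 2^k then ak L \<beta> k * KE Pos (\<lambda>_. 1) (L * 2^k - t) 0 x
     else if t < L * 2^(Suc k) then max 0 (min (real_of_int x) (ak L \<beta> k)) else 0)"

lemma ak_nonneg: "ak L \<beta> k \<ge> 0" by (simp add: ak_def)

lemma psi_nonneg: "psi L \<beta> k t x \<ge> 0"
  unfolding psi_def using ak_nonneg[of L \<beta> k] KE_nonneg[of Pos "\<lambda>_. 1"] by auto

lemma block_exists: "(L::nat) \<le> t \<Longrightarrow> t < L * 2^K \<Longrightarrow> \<exists>k<K. L * 2^k \<le> t \<and> t < L * 2^(Suc k)"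
proof (induction K)
  case 0 then have False by simp
  then show ?case ..
next
  case (Suc K)
  show ?case
  proof (cases "t < L * 2^K")
    case True then show ?thesis using Suc by (meson less_SucI)
  next
    case False then show ?thesis using Suc.prems by (intro exI[of _ K]) auto
  qed
qed

lemma psi_bad:
  assumes "0 \<le> \<beta>" "L * 2^k \<le> t" "t < L * 2^(Suc k)" "1 \<le> x" "real_of_int x < real t powr \<beta>"
  shows "psi L \<beta> k t x = x"
proof -
  have "real t powr \<beta> \<le> ak L \<beta> k" unfolding ak_def
  proof (intro powr_mono2)
    have "t \<le> L * 2 ^ Suc k" using assms(3) by simp
    then show "real t \<le> real (L * 2 ^ Suc k)" by (simp only: of_nat_le_iff)
  qed (use assms in auto)
  then show ?thesis using assms unfolding psi_def by auto
qed

lemma Q_step: "1 \<le> x \<Longrightarrow> KE Pos (\<lambda>_. 1) (Suc j) 0 x = (KE Pos (\<lambda>_. 1) j 0 (x+1) + KE Pos (\<lambda>_. 1) j 0 (x-1))/2"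
  using KE_Pos_t[of "\<lambda>_. 1" j 1 _ 0] by simp

lemma psi_super:
  assumes "1 \<le> x"
  shows "(psi L \<beta> k (Suc t) (x+1) + psi L \<beta> k (Suc t) (x-1))/2 \<le> psi L \<beta> k t x"
proof -
  let ?a = "ak L \<beta> k"
  have a0: "?a \<ge> 0" by (rule ak_nonneg)
  let ?tk = "L * 2^k"
  let ?tk1 = "L * 2^(Suc k)"
  have tk_le: "?tk \<le> ?tk1" by simp
  show ?thesis
  proof (cases "Suc t < ?tk")
    case True
    then have e: "?tk - t = Suc (?tk - Suc t)" by simp
    show ?thesis using True assms unfolding psi_def e Q_step[OF assms] by (simp add: field_simps)
  next
    case F1: False
    show ?thesis
    proof (cases "Suc t = ?tk")
      case True
      then have e: "?tk - t = Suc 0" by simp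
      have q2: "KE Pos (\<lambda>_. 1) 0 0 (x-1) = (if 2 \<le> x then 1 else 0)" by (cases "2 \<le> x") auto
      have q1: "KE Pos (\<lambda>_. 1) 0 0 (x+1) = 1" using assms by simp
      have "(psi L \<beta> k (Suc t) (x+1) + psi L \<beta> k (Suc t) (x-1))/2
          = (max 0 (min (real_of_int (x+1)) ?a) + max 0 (min (real_of_int (x-1)) ?a))/2"
        unfolding psi_def using True tk_le by auto
      also have "\<dots> \<le> (?a + ?a * (if 2 \<le> x then 1 else 0))/2" using a0 assms by (cases "2 \<le> x") auto
      also have "\<dots> = psi L \<beta> k t x"
        unfolding psi_def using True assms by (simp add: e Q_step q1 q2 field_simps)
      finally show ?thesis .
    next
      case F2: False
      then have tk: "?tk \<le> t" using F1 by simp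
      show ?thesis
      proof (cases "Suc t < ?tk1")
        case True
        have "(psi L \<beta> k (Suc t) (x+1) + psi L \<beta> k (Suc t) (x-1))/2
          = (min (real_of_int (x+1)) ?a + min (real_of_int (x-1)) ?a)/2"
          unfolding psi_def using True tk assms a0 by auto
        also have "\<dots> \<le> min (real_of_int x) ?a" by auto
        also have "\<dots> = psi L \<beta> k t x" unfolding psi_def using True tk assms a0 by auto
        finally show ?thesis .
      next
        case False
        have "psi L \<beta> k (Suc t) y = 0" for y unfolding psi_def using False tk by auto
        then show ?thesis using psi_nonneg[of L \<beta> k t x] by simp
      qed
    qed
  qed
qed




lemma Gb_D: "Gb \<beta> t x \<Longrightarrow> 1 \<le> x" by (simp add: Gb_def)

lemma D_bound:
  assumes L: "1 \<le> L" and b: "0 \<le> \<beta>"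
  shows "L \<le> t \<Longrightarrow> t + m < L * 2^K \<Longrightarrow> 0 \<le> x \<Longrightarrow>
    KE Pos real_of_int m t x - KE (Gb \<beta>) real_of_int m t x \<le> (\<Sum>k<K. psi L \<beta> k t x)"
proof (induction m arbitrary: t x)
  case 0
  have sn: "0 \<le> (\<Sum>k<K. psi L \<beta> k t x)" by (intro sum_nonneg psi_nonneg)
  show ?case
  proof (cases "1 \<le> x")
    case False
    then show ?thesis using sn by (simp add: Gb_def)
  next
    case True
    show ?thesis
    proof (cases "Gb \<beta> t x")
      case True
      then show ?thesis using sn \<open>1 \<le> x\<close> by simp
    next
      case False
      then have lt: "real_of_int x < real t powr \<beta>" using True by (simp add: Gb_def)
      obtain k where k: "k < K" "L * 2^k \<le> t" "t < L * 2^(Suc k)" 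
      proof -
        have "t < L * 2^K" "L \<le> t" using 0 by auto
        then show ?thesis using block_exists[of L t K] that by blast
      qed
      have "psi L \<beta> k t x = x" using psi_bad[OF b k(2,3) True lt] .
      moreover have "psi L \<beta> k t x \<le> (\<Sum>k<K. psi L \<beta> k t x)"
        using k(1) by (intro member_le_sum psi_nonneg) auto
      ultimately show ?thesis using True False by simp
    qed
  qed
next
  case (Suc m)
  have sn: "0 \<le> (\<Sum>k<K. psi L \<beta> k t x)" by (intro sum_nonneg psi_nonneg)
  show ?case
  proof (cases "1 \<le> x")
    case False
    then show ?thesis using sn by (simp add: Gb_def)
  next
    case True
    show ?thesis
    proof (cases "Gb \<beta> t x")
      case False
      then have lt: "real_of_int x < real t powr \<beta>" using True by (simp add: Gb_def)
      obtain k where k: "k < K" "L * 2^k \<le> t" "t < L * 2^(Suc k)" 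
      proof -
        have "t < L * 2^K" "L \<le> t" using Suc.prems by auto
        then show ?thesis using block_exists[of L t K] that by blast
      qed
      have "psi L \<beta> k t x = x" using psi_bad[OF b k(2,3) True lt] .
      moreover have "psi L \<beta> k t x \<le> (\<Sum>k<K. psi L \<beta> k t x)"
        using k(1) by (intro member_le_sum psi_nonneg) auto
      moreover have "KE Pos real_of_int (Suc m) t x = x" using KE_Pos_id True by simp
      ultimately show ?thesis using False by simp
    next
      case G: True
      have i1: "KE Pos real_of_int m (Suc t) (x+1) - KE (Gb \<beta>) real_of_int m (Suc t) (x+1) \<le> (\<Sum>k<K. psi L \<beta> k (Suc t) (x+1))"
        using Suc.prems True by (intro Suc.IH) auto
      have i2: "KE Pos real_of_int m (Suc t) (x-1) - KE (Gb \<beta>) real_of_int m (Suc t) (x-1) \<le> (\<Sum>k<K. psi L \<beta> k (Suc t) (x-1))"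
        using Suc.prems True by (intro Suc.IH) auto
      have "KE Pos real_of_int (Suc m) t x - KE (Gb \<beta>) real_of_int (Suc m) t x
         = ((KE Pos real_of_int m (Suc t) (x+1) - KE (Gb \<beta>) real_of_int m (Suc t) (x+1))
          + (KE Pos real_of_int m (Suc t) (x-1) - KE (Gb \<beta>) real_of_int m (Suc t) (x-1)))/2"
        using G True by (simp add: field_simps)
      also have "\<dots> \<le> ((\<Sum>k<K. psi L \<beta> k (Suc t) (x+1)) + (\<Sum>k<K. psi L \<beta> k (Suc t) (x-1)))/2"
        using i1 i2 by simp
      also have "\<dots> = (\<Sum>k<K. (psi L \<beta> k (Suc t) (x+1) + psi L \<beta> k (Suc t) (x-1))/2)"
        by (simp add: sum.distrib flip: sum_divide_distrib)
      also have "\<dots> \<le> (\<Sum>k<K. psi L \<beta> k t x)"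
        by (intro sum_mono psi_super True)
      finally show ?thesis .
    qed
  qed
qed




lemma term_bound:
  assumes L: "1 \<le> L" and b: "0 \<le> \<beta>" "\<beta> < 1/2"
  shows "psi L \<beta> (Suc k) L (int L) \<le> 4 * L * (real L powr (\<beta> - 1/2)) * (2 powr (\<beta> - 1/2))^(k+2)"
proof -
  define y where "y = real (L * 2^(k+2))"
  have ypos: "y > 0" using L by (simp add: y_def)
  have "(1::nat) < 2^(Suc k)" by (rule one_less_power) auto
  then have lt: "L < L * 2^(Suc k)" using L by simp
  have "psi L \<beta> (Suc k) L (int L) = ak L \<beta> (Suc k) * KE Pos (\<lambda>_. 1) (L * 2^(Suc k) - L) 0 (int L)"
    unfolding psi_def using lt by simp
  also have "\<dots> \<le> ak L \<beta> (Suc k) * (2 * real L / sqrt (real (L * 2^(Suc k) - L) + 1))"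
    using KE_Pos_bound[of "int L" "L * 2^(Suc k) - L" 0] by (intro mult_left_mono ak_nonneg) auto
  also have "\<dots> \<le> y powr \<beta> * (2 * real L / (sqrt y / 2))"
  proof -
    have ak: "ak L \<beta> (Suc k) \<le> y powr \<beta>" by (simp add: ak_def y_def)
    have "L * 2^k \<le> L * 2^(Suc k) - L"
    proof -
      have "2^k \<le> 2^(Suc k) - (1::nat)" by (induction k) auto
      then have "L * 2^k \<le> L * (2^(Suc k) - 1)" by simp
      then show ?thesis by (simp add: right_diff_distrib')
    qed
    then have "real (L * 2^k) \<le> real (L * 2^(Suc k) - L)" by (simp only: of_nat_le_iff)
    moreover have "y / 4 = real (L * 2^k)" unfolding y_def by simp
    ultimately have "y / 4 \<le> real (L * 2^(Suc k) - L) + 1" by linarith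
    then have "sqrt (y/4) \<le> sqrt (real (L * 2^(Suc k) - L) + 1)" by simp
    then have sq: "sqrt y / 2 \<le> sqrt (real (L * 2^(Suc k) - L) + 1)" by (simp add: real_sqrt_divide)
    have sy: "0 < sqrt y / 2" using ypos by simp
    have "0 < real (L * 2 ^ Suc k - L) + 1" by (metis add_nonneg_pos of_nat_0_le_iff zero_less_one)
    then have sp: "0 < sqrt (real (L * 2 ^ Suc k - L) + 1)" by (rule real_sqrt_gt_zero)
    then have nn: "0 \<le> 2 * real L / sqrt (real (L * 2 ^ Suc k - L) + 1)" by (intro divide_nonneg_pos) auto
    from sp have "2 * real L / sqrt (real (L * 2^(Suc k) - L) + 1) \<le> 2 * real L / (sqrt y / 2)"
      using sq sy by (intro divide_left_mono) auto
    then show ?thesis by (rule mult_mono[OF ak _ _ nn]) simp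
  qed
  also have "\<dots> = 4 * L * (y powr \<beta> / sqrt y)" by (simp add: field_simps)
  also have "y powr \<beta> / sqrt y = y powr (\<beta> - 1/2)"
    using ypos by (simp add: powr_diff powr_half_sqrt)
  also have "y powr (\<beta> - 1/2) = real L powr (\<beta> - 1/2) * (2 powr (\<beta> - 1/2))^(k+2)"
  proof -
    have "y = real L * 2 powr (real (k+2))" unfolding y_def by (subst powr_realpow) auto
    then have "y powr (\<beta> - 1/2) = real L powr (\<beta> - 1/2) * (2 powr (real (k+2))) powr (\<beta> - 1/2)"
      using L by (simp add: powr_mult)
    also have "(2 powr (real (k+2))) powr (\<beta> - 1/2) = (2 powr (\<beta> - 1/2)) powr (real (k+2))"
      by (simp add: powr_powr mult.commute)
    also have "\<dots> = (2 powr (\<beta> - 1/2))^(k+2)" by (subst powr_realpow) auto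
    finally show ?thesis .
  qed
  finally show ?thesis by (simp add: mult.assoc)
qed




lemma aux_div: "0 < (S::real) \<Longrightarrow> a * S / (4 * S) = a / 4" by simp

lemma psi_sum_bound:
  assumes L: "1 \<le> L" and b: "0 \<le> \<beta>" "\<beta> < 1/2"
    and hL: "real L powr (\<beta> - 1/2) \<le> (1 - 2 powr (\<beta> - 1/2)) / 16"
  shows "(\<Sum>k<K. psi L \<beta> k L (int L)) \<le> L / 2"
proof -
  define r where "r = (2::real) powr (\<beta> - 1/2)"
  define p where "p = real L powr (\<beta> - 1/2)"
  have r1: "r < 1" unfolding r_def using b by (intro powr_less_one) auto
  have r0: "0 < r" unfolding r_def by simp
  have p0: "0 \<le> p" unfolding p_def by simp
  have hp: "p \<le> (1 - r)/16" using hL unfolding p_def r_def .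
  have Lr: "1 \<le> real L" using L by simp
  have psi0: "psi L \<beta> 0 L (int L) \<le> L / 8"
  proof -
    have "psi L \<beta> 0 L (int L) \<le> ak L \<beta> 0" unfolding psi_def using L ak_nonneg[of L \<beta> 0] by auto
    also have "\<dots> = (2 * real L) powr \<beta>" by (simp add: ak_def mult.commute)
    also have "\<dots> = (2 * real L) powr (1 + (\<beta> - 1))" by simp
    also have "\<dots> = (2 * real L) powr 1 * (2 * real L) powr (\<beta> - 1)"
      by (rule powr_add)
    also have "\<dots> \<le> (2 * real L) * (2 * real L) powr (\<beta> - 1/2)"
      using Lr by (simp add: powr_mono)
    also have "\<dots> \<le> (2 * real L) * p"
      unfolding p_def using Lr b by (intro mult_left_mono powr_mono2') auto
    also have "\<dots> \<le> (2 * real L) * ((1 - r)/16)" using hp Lr by (intro mult_left_mono) auto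
    also have "\<dots> \<le> L / 8" using r0 Lr by (simp add: field_simps)
    finally show ?thesis .
  qed
  show ?thesis
  proof (cases K)
    case 0 then show ?thesis by simp
  next
    case (Suc K')
    have "(\<Sum>k<K. psi L \<beta> k L (int L)) = psi L \<beta> 0 L (int L) + (\<Sum>k<K'. psi L \<beta> (Suc k) L (int L))"
      unfolding Suc by (rule sum.lessThan_Suc_shift)
    also have "(\<Sum>k<K'. psi L \<beta> (Suc k) L (int L)) \<le> (\<Sum>k<K'. 4 * real L * p * r^(k+2))"
      unfolding p_def r_def by (intro sum_mono term_bound L b)
    also have "(\<Sum>k<K'. 4 * real L * p * r^(k+2)) = (\<Sum>k<K'. (4 * real L * p * r^2) * r^k)"
      by (intro sum.cong refl) (simp add: power_add power2_eq_square mult_ac)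
    also have "\<dots> = 4 * real L * p * r^2 * (\<Sum>k<K'. r^k)" by (rule sum_distrib_left[symmetric])
    also have "(\<Sum>k<K'. r^k) = (1 - r^K') / (1 - r)" using r1 by (simp add: sum_gp_strict)
    also have "4 * real L * p * r^2 * ((1 - r^K') / (1 - r)) \<le> 4 * real L * p * 1 * (1 / (1 - r))"
    proof (intro mult_mono)
      show "r^2 \<le> 1" using r0 r1 by (simp add: power_le_one)
      show "(1 - r^K') / (1 - r) \<le> 1 / (1 - r)" using r0 r1 by (intro divide_right_mono) auto
      show "0 \<le> (1 - r^K') / (1 - r)" using r0 r1 by (intro divide_nonneg_pos) (auto simp: power_le_one)
    qed (use p0 in auto)
    also have "4 * real L * p * 1 * (1 / (1 - r)) \<le> 4 * real L * ((1 - r)/16) * (1 / (1 - r))"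
    proof -
      have "4 * real L * p \<le> 4 * real L * ((1 - r)/16)" using hp Lr by (intro mult_left_mono) auto
      then show ?thesis using r1 by (intro mult_right_mono) auto
    qed
    also have "\<dots> = L / 4" using r1 by (simp add: field_simps)
    finally show ?thesis using psi0 by simp
  qed
qed

lemma n_lt_pow: "n < (2::nat)^n" by (rule less_exp)

lemma core_lower:
  assumes L: "1 \<le> L" and b: "0 \<le> \<beta>" "\<beta> < 1/2"
    and hL: "real L powr (\<beta> - 1/2) \<le> (1 - 2 powr (\<beta> - 1/2)) / 16"
  shows "real L / (8 * sqrt (real L ^ 2 + 3 * real m)) \<le> KE (Gb \<beta>) (\<lambda>_. 1) m L (int L)"
proof -
  have Lr: "1 \<le> real L" using L by simp
  have K: "L + m < L * 2^(L+m)"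
  proof -
    have "L + m < 2^(L+m)" by (rule n_lt_pow)
    also have "\<dots> \<le> L * 2^(L+m)" using L by simp
    finally show ?thesis .
  qed
  have "KE Pos real_of_int m L (int L) - KE (Gb \<beta>) real_of_int m L (int L) \<le> (\<Sum>k<L+m. psi L \<beta> k L (int L))"
    using K by (intro D_bound L b) auto
  also have "\<dots> \<le> L / 2" by (rule psi_sum_bound[OF L b hL])
  finally have h1: "real L / 2 \<le> KE (Gb \<beta>) real_of_int m L (int L)"
    using KE_Pos_id[of "int L" m L] by simp
  define R where "R = 2 * sqrt (real L ^ 2 + 3 * real m)"
  have pos: "0 < real L ^ 2 + 3 * real m" using Lr by (intro add_pos_nonneg) auto
  then have R0: "0 < R" unfolding R_def by simp
  have R2: "R^2 = 4 * (real L ^ 2 + 3 * real m)" unfolding R_def by (simp add: power_mult_distrib)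
  have pw: "real_of_int x \<le> R * 1 + (1 / R^2) * real_of_int x ^ 3" if "1 \<le> x" for x :: int
  proof (cases "real_of_int x \<le> R")
    case True
    have "0 \<le> (1 / R^2) * real_of_int x ^ 3" using that by simp
    then show ?thesis using True by simp
  next
    case False
    then have xr: "R < real_of_int x" by simp
    have "R^2 \<le> (real_of_int x)^2" using xr R0 by (intro power_mono) auto
    then have "1 \<le> (real_of_int x)^2 / R^2" using R0 by simp
    then have "real_of_int x * 1 \<le> real_of_int x * ((real_of_int x)^2 / R^2)"
      using xr R0 by (intro mult_left_mono) auto
    also have "\<dots> = (1 / R^2) * real_of_int x ^ 3" by (simp add: power2_eq_square power3_eq_cube field_simps)
    finally show ?thesis using R0 by simp
  qed
  have "KE (Gb \<beta>) real_of_int m L (int L) \<le> KE (Gb \<beta>) (\<lambda>x. R * 1 + (1 / R^2) * real_of_int x ^ 3) m L (int L)"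
    by (intro KE_mono_g pw Gb_D)
  also have "\<dots> = R * KE (Gb \<beta>) (\<lambda>_. 1) m L (int L) + (1 / R^2) * KE (Gb \<beta>) (\<lambda>x. real_of_int x ^ 3) m L (int L)"
    using KE_add[of "Gb \<beta>" "\<lambda>x. R * 1" "\<lambda>x. (1 / R^2) * real_of_int x ^ 3" m L "int L"]
      KE_cmult[of "Gb \<beta>" R "\<lambda>_. 1" m L "int L"] KE_cmult[of "Gb \<beta>" "1 / R^2" "\<lambda>x. real_of_int x ^ 3" m L "int L"]
    by simp
  finally have h2a: "KE (Gb \<beta>) real_of_int m L (int L) \<le> R * KE (Gb \<beta>) (\<lambda>_. 1) m L (int L) + (1 / R^2) * KE (Gb \<beta>) (\<lambda>x. real_of_int x ^ 3) m L (int L)" .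
  have "KE (Gb \<beta>) (\<lambda>x. real_of_int x ^ 3) m L (int L) \<le> KE Pos (\<lambda>x. real_of_int x ^ 3) m L (int L)"
    by (rule KE_mono_A) (auto dest: Gb_D Pos_D)
  also have "\<dots> \<le> real L ^ 3 + 3 * m * L" using KE_Pos_cube[of "int L" m L] by simp
  finally have c1: "KE (Gb \<beta>) (\<lambda>x. real_of_int x ^ 3) m L (int L) \<le> real L ^ 3 + 3 * m * L" .
  have "(1 / R^2) * KE (Gb \<beta>) (\<lambda>x. real_of_int x ^ 3) m L (int L) \<le> (1 / R^2) * (real L ^ 3 + 3 * m * L)"
    using c1 R0 by (intro mult_left_mono) auto
  then have h2: "KE (Gb \<beta>) real_of_int m L (int L) \<le> R * KE (Gb \<beta>) (\<lambda>_. 1) m L (int L) + (1 / R^2) * (real L ^ 3 + 3 * m * L)"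
    using h2a by linarith
  have "(1 / R^2) * (real L ^ 3 + 3 * m * L) = (real L * (real L^2 + 3*real m)) / (4 * (real L^2 + 3*real m))"
    unfolding R2 by (simp add: power3_eq_cube power2_eq_square algebra_simps)
  also have "\<dots> = L / 4" using pos by (rule aux_div)
  finally have e4: "(1 / R^2) * (real L ^ 3 + 3 * m * L) = L / 4" .
  have h3: "KE (Gb \<beta>) real_of_int m L (int L) \<le> R * KE (Gb \<beta>) (\<lambda>_. 1) m L (int L) + L / 4"
    using h2 unfolding e4 .
  have "real L / 4 \<le> R * KE (Gb \<beta>) (\<lambda>_. 1) m L (int L)" using h1 h3 by linarith
  then have "real L / 4 / R \<le> KE (Gb \<beta>) (\<lambda>_. 1) m L (int L)" using R0 by (simp add: field_simps)
  then show ?thesis unfolding R_def by (simp add: field_simps)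
qed




fun okl :: "(nat \<Rightarrow> int \<Rightarrow> bool) \<Rightarrow> nat \<Rightarrow> int \<Rightarrow> int \<Rightarrow> int list \<Rightarrow> bool" where
  "okl A t x s [] = A t x"
| "okl A t x s (e # es) = (A t x \<and> okl A (Suc t) (x + s * e) (s * e) es)"

definition Ls :: "nat \<Rightarrow> int list set" where
  "Ls n = {xs. set xs \<subseteq> {-1, 1} \<and> length xs = n}"

lemma Ls_finite: "finite (Ls n)"
  unfolding Ls_def by (rule finite_lists_length_eq) simp

lemma Ls_card: "card (Ls n) = 2^n"
proof -
  have "card {-1, 1::int} = 2" by simp
  moreover have fin: "finite {-1, 1::int}" by simp
  ultimately show ?thesis by (simp only: Ls_def card_lists_length_eq[OF fin])
qed

lemma Ls_Suc: "Ls (Suc n) = (\<lambda>(xs, e). e # xs) ` (Ls n \<times> {-1, 1})"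
  unfolding Ls_def by (rule lists_length_Suc_eq)

lemma count_okl:
  "s \<in> {-1, 1} \<Longrightarrow> (\<Sum>xs\<in>Ls m. if okl A t x s xs then 1 else 0) = 2^m * KE A (\<lambda>_. 1) m t x"
proof (induction m arbitrary: t x s)
  case 0
  have "Ls 0 = {[]}" unfolding Ls_def by auto
  then show ?case by simp
next
  case (Suc m)
  have inj: "inj_on (\<lambda>(xs, e). e # xs) (Ls m \<times> {-1, 1})" by (auto simp: inj_on_def)
  have "(\<Sum>xs\<in>Ls (Suc m). if okl A t x s xs then 1 else (0::real))
      = (\<Sum>p\<in>Ls m \<times> {-1, 1}. if okl A t x s (snd p # fst p) then 1 else 0)"
    unfolding Ls_Suc by (subst sum.reindex[OF inj]) (simp add: case_prod_beta)
  also have "\<dots> = (\<Sum>xs\<in>Ls m. \<Sum>e\<in>{-1, 1}. if okl A t x s (e # xs) then 1 else 0)"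
    by (subst sum.cartesian_product) (simp add: case_prod_beta)
  also have "\<dots> = (\<Sum>e\<in>{-1, 1::int}. \<Sum>xs\<in>Ls m. if okl A t x s (e # xs) then 1 else 0)"
    by (rule sum.swap)
  also have "\<dots> = (\<Sum>e\<in>{-1, 1::int}. if A t x then (\<Sum>xs\<in>Ls m. if okl A (Suc t) (x + s * e) (s * e) xs then 1 else 0) else 0)"
    by (intro sum.cong refl) auto
  also have "\<dots> = (\<Sum>e\<in>{-1, 1::int}. if A t x then 2^m * KE A (\<lambda>_. 1) m (Suc t) (x + s * e) else 0)"
    using Suc.prems by (intro sum.cong refl) (auto simp: Suc.IH)
  also have "\<dots> = (if A t x then 2^m * (KE A (\<lambda>_. 1) m (Suc t) (x - s) + KE A (\<lambda>_. 1) m (Suc t) (x + s)) else 0)"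
    by (simp add: algebra_simps)
  also have "\<dots> = 2^(Suc m) * KE A (\<lambda>_. 1) (Suc m) t x"
    using Suc.prems by auto
  finally show ?case .
qed

definition pprod :: "int list \<Rightarrow> nat \<Rightarrow> int" where
  "pprod xs k = (\<Prod>j=1..k. xs ! (j - 1))"

lemma pprod_Cons: "pprod (e # es) (Suc k) = e * pprod es k"
proof -
  have "pprod (e # es) (Suc k) = (e # es) ! 0 * (\<Prod>j=Suc 1..Suc k. (e # es) ! (j - 1))"
    unfolding pprod_def by (subst prod.atLeast_Suc_atMost) auto
  also have "(\<Prod>j=Suc 1..Suc k. (e # es) ! (j - 1)) = (\<Prod>j=1..k. (e # es) ! j)"
    by (subst prod.shift_bounds_cl_Suc_ivl) simp
  also have "\<dots> = (\<Prod>j=1..k. es ! (j - 1))"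
    by (intro prod.cong refl) (auto simp: nth_Cons split: nat.split)
  finally show ?thesis by (simp add: pprod_def)
qed

lemma psum_Cons: "(\<Sum>k=1..Suc i. pprod (e # es) k) = e + e * (\<Sum>k=1..i. pprod es k)"
proof -
  have "(\<Sum>k=1..Suc i. pprod (e # es) k) = pprod (e # es) 1 + (\<Sum>k=Suc 1..Suc i. pprod (e # es) k)"
    by (subst sum.atLeast_Suc_atMost) auto
  also have "(\<Sum>k=Suc 1..Suc i. pprod (e # es) k) = (\<Sum>k=1..i. pprod (e # es) (Suc k))"
    by (subst sum.shift_bounds_cl_Suc_ivl) simp
  also have "\<dots> = (\<Sum>k=1..i. e * pprod es k)" by (simp add: pprod_Cons)
  also have "pprod (e # es) 1 = e" by (simp add: pprod_def)
  finally show ?thesis by (simp add: sum_distrib_left)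
qed

lemma okl_iff: "okl A t x s xs \<longleftrightarrow> (\<forall>i\<le>length xs. A (t + i) (x + s * (\<Sum>k=1..i. pprod xs k)))"
proof (induction xs arbitrary: t x s)
  case Nil
  then show ?case by simp
next
  case (Cons e es)
  have "okl A t x s (e # es) \<longleftrightarrow> A t x \<and> (\<forall>i\<le>length es. A (Suc t + i) (x + s * e + s * e * (\<Sum>k=1..i. pprod es k)))"
    using Cons.IH by simp
  also have "\<dots> \<longleftrightarrow> (\<forall>i\<le>length (e # es). A (t + i) (x + s * (\<Sum>k=1..i. pprod (e # es) k)))"
  proof
    assume h: "A t x \<and> (\<forall>i\<le>length es. A (Suc t + i) (x + s * e + s * e * (\<Sum>k=1..i. pprod es k)))"
    show "\<forall>i\<le>length (e # es). A (t + i) (x + s * (\<Sum>k=1..i. pprod (e # es) k))"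
    proof (intro allI impI)
      fix i assume i: "i \<le> length (e # es)"
      show "A (t + i) (x + s * (\<Sum>k=1..i. pprod (e # es) k))"
      proof (cases i)
        case 0 then show ?thesis using h by simp
      next
        case (Suc i')
        then have "i' \<le> length es" using i by simp
        then have a: "A (Suc t + i') (x + s * e + s * e * (\<Sum>k=1..i'. pprod es k))" using h by blast
        have e1: "t + i = Suc t + i'" using Suc by simp
        have e2: "x + s * (\<Sum>k=1..i. pprod (e # es) k) = x + s * e + s * e * (\<Sum>k=1..i'. pprod es k)"
          unfolding Suc psum_Cons by (simp add: algebra_simps)
        show ?thesis unfolding e1 e2 by (rule a)
      qed
    qed
  next
    assume h: "\<forall>i\<le>length (e # es). A (t + i) (x + s * (\<Sum>k=1..i. pprod (e # es) k))"
    have "A t x" using h[rule_format, of 0] by simp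
    moreover have "A (Suc t + i) (x + s * e + s * e * (\<Sum>k=1..i. pprod es k))" if "i \<le> length es" for i
    proof -
      have li: "Suc i \<le> length (e # es)" using that by simp
      have a: "A (t + Suc i) (x + s * (\<Sum>k=1..Suc i. pprod (e # es) k))" using h li by blast
      have e2: "x + s * (\<Sum>k=1..Suc i. pprod (e # es) k) = x + s * e + s * e * (\<Sum>k=1..i. pprod es k)"
        unfolding psum_Cons by (simp add: algebra_simps)
      have e1: "t + Suc i = Suc t + i" by simp
      show ?thesis using a unfolding e1 e2 .
    qed
    ultimately show "A t x \<and> (\<forall>i\<le>length es. A (Suc t + i) (x + s * e + s * e * (\<Sum>k=1..i. pprod es k)))" by blast
  qed
  finally show ?case .
qed




lemma ball_aux: "(\<forall>i\<le>n. i = 0 \<or> P i) \<longleftrightarrow> (\<forall>i\<in>{1..n}. P (i::nat))"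
  by (auto simp: Suc_le_eq)

lemma prob_eq_KE:
  fixes M :: "'a measure" and X :: "nat \<Rightarrow> 'a \<Rightarrow> real" and \<alpha> :: real
  assumes P: "prob_space M"
    and ind: "prob_space.indep_vars M (\<lambda>_. borel) X {1..}"
    and h1: "\<And>i. i \<ge> 1 \<Longrightarrow> measure M {\<omega> \<in> space M. X i \<omega> = 1} = 1/2"
    and hm1: "\<And>i. i \<ge> 1 \<Longrightarrow> measure M {\<omega> \<in> space M. X i \<omega> = -1} = 1/2"
  shows "measure M {\<omega> \<in> space M. \<forall>i\<in>{1..n}. Zsum X i \<omega> \<ge> real i powr \<alpha>}
    = KE (\<lambda>t y. t = 0 \<or> real t powr \<alpha> \<le> real_of_int y) (\<lambda>_. 1) n 0 0"
proof -
  interpret prob_space M by (rule P)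
  have meas: "X i \<in> borel_measurable M" if "i \<ge> 1" for i
    using ind that unfolding indep_vars_def by auto
  define B where "B xs = {\<omega> \<in> space M. \<forall>i\<in>{1..length xs}. X i \<omega> = real_of_int (xs ! (i-1))}" for xs
  define Ag where "Ag = (\<lambda>t y. t = 0 \<or> real t powr \<alpha> \<le> real_of_int y)"
  define E where "E = {\<omega> \<in> space M. \<forall>i\<in>{1..n}. Zsum X i \<omega> \<ge> real i powr \<alpha>}"
  define good where "good xs \<longleftrightarrow> (\<forall>i\<in>{1..n}. real i powr \<alpha> \<le> real_of_int (\<Sum>k=1..i. pprod xs k))" for xs
  have pre: "X i -` {c} \<inter> space M \<in> sets M" if "i \<ge> 1" for i c
    by (rule measurable_sets[OF meas[OF that]]) auto
  have Bsets: "B xs \<in> sets M" for xs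
    unfolding B_def
  proof (rule sets.sets_Collect_finite_All)
    fix i assume "i \<in> {1..length xs}"
    then have "{\<omega> \<in> space M. X i \<omega> = real_of_int (xs ! (i-1))} = X i -` {real_of_int (xs ! (i-1))} \<inter> space M"
      "i \<ge> 1" by auto
    then show "{\<omega> \<in> space M. X i \<omega> = real_of_int (xs ! (i-1))} \<in> sets M" using pre by simp
  qed simp
  have pX: "prob (X i -` {real_of_int c} \<inter> space M) = 1/2" if "i \<ge> 1" "c \<in> {-1, 1}" for i c
  proof -
    have "X i -` {real_of_int c} \<inter> space M = {\<omega> \<in> space M. X i \<omega> = real_of_int c}" by auto
    then show ?thesis using that h1 hm1 by auto
  qed
  have pB: "prob (B xs) = (1/2)^n" if xs: "xs \<in> Ls n" for xs
  proof (cases "n = 0")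
    case True
    then have "xs = []" using xs by (simp add: Ls_def)
    then show ?thesis using True by (simp add: B_def prob_space)
  next
    case False
    have len: "length xs = n" "set xs \<subseteq> {-1, 1}" using xs by (auto simp: Ls_def)
    have "B xs = (\<Inter>i\<in>{1..n}. X i -` {real_of_int (xs ! (i-1))} \<inter> space M)"
      unfolding B_def len using False by auto
    then have "prob (B xs) = (\<Prod>i\<in>{1..n}. prob (X i -` {real_of_int (xs ! (i-1))} \<inter> space M))"
      using indep_varsD[OF ind, of "{1..n}" "\<lambda>i. {real_of_int (xs ! (i-1))}"] False by auto
    also have "\<dots> = (\<Prod>i\<in>{1..n}. 1/2)"
    proof (intro prod.cong refl pX)
      fix i assume "i \<in> {1..n}"
      then have "i - 1 < length xs" using len by auto
      then show "xs ! (i - 1) \<in> {-1, 1}" using len(2) nth_mem by blast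
    qed auto
    finally show ?thesis by simp
  qed
  have disj: "disjoint_family_on B (Ls n)"
    unfolding disjoint_family_on_def
  proof (intro ballI impI)
    fix xs ys assume xs: "xs \<in> Ls n" and ys: "ys \<in> Ls n" and ne: "xs \<noteq> ys"
    have l: "length xs = n" "length ys = n" using xs ys by (auto simp: Ls_def)
    then obtain j where j: "j < n" "xs ! j \<noteq> ys ! j" using ne nth_equalityI by metis
    show "B xs \<inter> B ys = {}"
    proof (rule ccontr)
      assume "B xs \<inter> B ys \<noteq> {}"
      then obtain \<omega> where w: "\<omega> \<in> B xs" "\<omega> \<in> B ys" by blast
      have mem: "Suc j \<in> {1..length xs}" "Suc j \<in> {1..length ys}" using j l by auto
      have "X (Suc j) \<omega> = real_of_int (xs ! (Suc j - 1))" using w(1) mem(1) unfolding B_def by blast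
      moreover have "X (Suc j) \<omega> = real_of_int (ys ! (Suc j - 1))" using w(2) mem(2) unfolding B_def by blast
      ultimately have "X (Suc j) \<omega> = real_of_int (xs ! j)" "X (Suc j) \<omega> = real_of_int (ys ! j)" by simp_all
      then show False using j by simp
    qed
  qed
  define U where "U = (\<Union>xs\<in>Ls n. B xs)"
  have Usets: "U \<in> sets M" unfolding U_def using Bsets Ls_finite by blast
  have "prob U = (\<Sum>xs\<in>Ls n. prob (B xs))"
    unfolding U_def using Ls_finite Bsets disj by (intro finite_measure_finite_Union) auto
  also have "\<dots> = (\<Sum>xs\<in>Ls n. (1/2)^n)" using pB by simp
  also have "\<dots> = 1" by (simp add: Ls_card power_one_over field_simps)
  finally have pU: "prob U = 1" .
  have Zm: "Zsum X i \<in> borel_measurable M" for i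
    unfolding Zsum_def by (intro borel_measurable_sum borel_measurable_prod meas) auto
  have Esets: "E \<in> sets M"
    unfolding E_def
  proof (rule sets.sets_Collect_finite_All)
    fix i assume "i \<in> {1..n}"
    show "{\<omega> \<in> space M. real i powr \<alpha> \<le> Zsum X i \<omega>} \<in> sets M"
      using Zm[of i] unfolding borel_measurable_iff_ge by blast
  qed simp
  have Zlink: "Zsum X i \<omega> = real_of_int (\<Sum>k=1..i. pprod xs k)"
    if "xs \<in> Ls n" "\<omega> \<in> B xs" "i \<le> n" for xs \<omega> i
  proof -
    have l: "length xs = n" using that by (simp add: Ls_def)
    have "Zsum X i \<omega> = (\<Sum>k=1..i. \<Prod>j=1..k. real_of_int (xs ! (j-1)))"
      unfolding Zsum_def
    proof (intro sum.cong prod.cong refl)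
      fix k j assume "k \<in> {1..i}" "j \<in> {1..k}"
      then show "X j \<omega> = real_of_int (xs ! (j-1))" using that l unfolding B_def by auto
    qed
    then show ?thesis by (simp add: pprod_def)
  qed
  have EU: "E \<inter> U = (\<Union>xs\<in>{xs\<in>Ls n. good xs}. B xs)"
  proof
    show "E \<inter> U \<subseteq> (\<Union>xs\<in>{xs\<in>Ls n. good xs}. B xs)"
    proof
      fix \<omega> assume "\<omega> \<in> E \<inter> U"
      then obtain xs where xs: "xs \<in> Ls n" "\<omega> \<in> B xs" "\<omega> \<in> E" unfolding U_def by blast
      have "good xs" unfolding good_def using xs Zlink[OF xs(1,2)] unfolding E_def by auto
      then show "\<omega> \<in> (\<Union>xs\<in>{xs\<in>Ls n. good xs}. B xs)" using xs by blast
    qed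
  next
    show "(\<Union>xs\<in>{xs\<in>Ls n. good xs}. B xs) \<subseteq> E \<inter> U"
    proof
      fix \<omega> assume "\<omega> \<in> (\<Union>xs\<in>{xs\<in>Ls n. good xs}. B xs)"
      then obtain xs where xs: "xs \<in> Ls n" "\<omega> \<in> B xs" "good xs" by blast
      have "\<omega> \<in> E" unfolding E_def using xs Zlink[OF xs(1,2)] unfolding good_def
        by (auto simp: B_def)
      then show "\<omega> \<in> E \<inter> U" using xs unfolding U_def by blast
    qed
  qed
  have "prob (E \<inter> U) = (\<Sum>xs\<in>{xs\<in>Ls n. good xs}. prob (B xs))"
    unfolding EU using Ls_finite Bsets disj
    by (intro finite_measure_finite_Union) (auto simp: disjoint_family_on_def)
  also have "\<dots> = (\<Sum>xs\<in>{xs\<in>Ls n. good xs}. (1/2)^n)" using pB by simp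
  also have "\<dots> = (\<Sum>xs\<in>Ls n. if good xs then 1 else 0) * (1/2)^n"
  proof -
    have "{xs \<in> Ls n. good xs} = Ls n \<inter> Collect good" by blast
    then show ?thesis using Ls_finite by (simp add: sum.If_cases sum_distrib_right)
  qed
  also have "(\<Sum>xs\<in>Ls n. if good xs then 1 else 0) = (\<Sum>xs\<in>Ls n. if okl Ag 0 0 1 xs then 1 else (0::real))"
  proof (intro sum.cong refl)
    fix xs assume "xs \<in> Ls n"
    then have l: "length xs = n" by (simp add: Ls_def)
    have "okl Ag 0 0 1 xs \<longleftrightarrow> (\<forall>i\<le>n. i = 0 \<or> real i powr \<alpha> \<le> real_of_int (\<Sum>k=1..i. pprod xs k))"
      unfolding okl_iff l Ag_def by simp
    also have "\<dots> \<longleftrightarrow> good xs" unfolding good_def by (rule ball_aux)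
    finally have "okl Ag 0 0 1 xs \<longleftrightarrow> good xs" .
    then show "(if good xs then 1 else 0) = (if okl Ag 0 0 1 xs then 1 else (0::real))" by simp
  qed
  also have "\<dots> = 2^n * KE Ag (\<lambda>_. 1) n 0 0" by (rule count_okl) simp
  finally have pEU: "prob (E \<inter> U) = KE Ag (\<lambda>_. 1) n 0 0" by (simp add: power_one_over field_simps)
  have "prob (E - U) \<le> prob (space M - U)" using Esets Usets sets.sets_into_space[OF Esets] by (intro finite_measure_mono) auto
  also have "\<dots> = 0" using pU Usets by (simp add: prob_compl)
  finally have "prob (E - U) = 0" using measure_nonneg[of M "E - U"] by linarith
  moreover have "prob E = prob (E \<inter> U) + prob (E - U)"
  proof -
    have "E = (E \<inter> U) \<union> (E - U)" by blast
    then have "prob E = prob ((E \<inter> U) \<union> (E - U))" by simp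
    also have "\<dots> = prob (E \<inter> U) + prob (E - U)"
      using Esets Usets by (intro finite_measure_Union) auto
    finally show ?thesis .
  qed
  ultimately show ?thesis using pEU unfolding E_def Ag_def by simp
qed




lemma KE_mono_A_from:
  assumes "\<And>t' x. t \<le> t' \<Longrightarrow> A t' x \<Longrightarrow> B t' x" "\<And>t x. B t x \<Longrightarrow> g x \<ge> 0"
  shows "KE A g m t x \<le> KE B g m t x"
  using assms(1)
proof (induction m arbitrary: t x)
  case 0 then show ?case using assms(2) by auto
next
  case (Suc m)
  have i1: "KE A g m (Suc t) y \<le> KE B g m (Suc t) y" for y using Suc.prems by (intro Suc.IH) auto
  show ?case using Suc.prems[of t x] i1[of "x+1"] i1[of "x-1"] KE_nonneg[of B g, OF assms(2)]
    by (auto simp: add_mono divide_right_mono)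
qed

lemma KE_prefix:
  assumes "\<And>i. i < j \<Longrightarrow> A (t+i) (x + int i)" "\<And>t x. A t x \<Longrightarrow> g x \<ge> 0"
  shows "(1/2)^j * KE A g m (t + j) (x + int j) \<le> KE A g (j + m) t x"
  using assms(1)
proof (induction j arbitrary: t x)
  case 0 then show ?case by simp
next
  case (Suc j)
  have At: "A t x" using Suc.prems[of 0] by simp
  have ih: "(1/2)^j * KE A g m (Suc t + j) (x + 1 + int j) \<le> KE A g (j + m) (Suc t) (x + 1)"
    using Suc.prems[of "Suc i" for i] by (intro Suc.IH) (auto simp: algebra_simps)
  have nn: "0 \<le> KE A g (j + m) (Suc t) (x - 1)" by (rule KE_nonneg[OF assms(2)])
  have "(1/2)^(Suc j) * KE A g m (t + Suc j) (x + int (Suc j)) = (1/2) * ((1/2)^j * KE A g m (Suc t + j) (x + 1 + int j))"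
    by (simp add: algebra_simps)
  also have "\<dots> \<le> (1/2) * KE A g (j + m) (Suc t) (x + 1)" using ih by simp
  also have "\<dots> \<le> KE A g (Suc j + m) t x" using At nn by simp
  finally show ?case .
qed

definition Ag :: "real \<Rightarrow> nat \<Rightarrow> int \<Rightarrow> bool" where
  "Ag \<alpha> t y = (t = 0 \<or> real t powr \<alpha> \<le> real_of_int y)"

lemma upper_KE:
  assumes "1 \<le> n"
  shows "KE (Ag \<alpha>) (\<lambda>_. 1) n 0 0 \<le> 1 / sqrt (real n)"
proof -
  obtain n' where n: "n = Suc n'" using assms by (cases n) auto
  have z: "KE (Ag \<alpha>) (\<lambda>_. 1) n' 1 (-1) = 0"
    by (cases n') (auto simp: Ag_def)
  have "KE (Ag \<alpha>) (\<lambda>_. 1) n' 1 1 \<le> KE Pos (\<lambda>_. 1) n' 1 1"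
  proof (rule KE_mono_A_from)
    fix t' x assume "1 \<le> t'" "Ag \<alpha> t' x"
    then have "0 < real t' powr \<alpha>" "real t' powr \<alpha> \<le> real_of_int x" by (auto simp: Ag_def)
    then have "1 \<le> x" by linarith
    then show "Pos t' x" by simp
  qed simp
  also have "\<dots> \<le> 2 * 1 / sqrt (real n' + 1)" using KE_Pos_bound[of 1 n' 1] by simp
  finally have "KE (Ag \<alpha>) (\<lambda>_. 1) n 0 0 \<le> (2 / sqrt (real n' + 1) + 0) / 2"
    unfolding n using z by (simp add: Ag_def)
  also have "\<dots> = 1 / sqrt (real n)" using n by simp
  finally show ?thesis .
qed

lemma exists_L:
  assumes "0 \<le> \<beta>" "\<beta> < 1/2"
  shows "\<exists>L::nat. 1 \<le> L \<and> real L powr (\<beta> - 1/2) \<le> (1 - 2 powr (\<beta> - 1/2)) / 16"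
proof -
  have r1: "2 powr (\<beta> - 1/2) < (1::real)" using assms by (intro powr_less_one) auto
  have "((\<lambda>L. real L powr (\<beta> - 1/2)) \<longlongrightarrow> 0) sequentially"
    by (rule tendsto_neg_powr) (use assms filterlim_real_sequentially in auto)
  then have "eventually (\<lambda>L. real L powr (\<beta> - 1/2) < (1 - 2 powr (\<beta> - 1/2)) / 16) sequentially"
    using r1 by (intro order_tendstoD(2)) auto
  then obtain N where N: "\<And>L. N \<le> L \<Longrightarrow> real L powr (\<beta> - 1/2) < (1 - 2 powr (\<beta> - 1/2)) / 16"
    unfolding eventually_sequentially by blast
  show ?thesis using N[of "max N 1"] by (intro exI[of _ "max N 1"]) auto
qed

lemma lower_KE:
  assumes a: "\<alpha> < 1/2"
  shows "\<exists>c>0. c \<le> 1 \<and> (\<forall>n\<ge>1. c / sqrt (real n) \<le> KE (Ag \<alpha>) (\<lambda>_. 1) n 0 0)"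
proof -
  define \<beta> where "\<beta> = max \<alpha> 0"
  have b: "0 \<le> \<beta>" "\<beta> < 1/2" "\<alpha> \<le> \<beta>" using a by (auto simp: \<beta>_def)
  obtain L :: nat where L: "1 \<le> L" and hL: "real L powr (\<beta> - 1/2) \<le> (1 - 2 powr (\<beta> - 1/2)) / 16"
    using exists_L[OF b(1,2)] by blast
  have Lr: "1 \<le> real L" using L by simp
  define c where "c = (1/2)^L * (real L / (8 * sqrt (real L ^ 2 + 3)))"
  have s3: "real L \<le> sqrt (real L ^ 2 + 3)" by (rule real_le_rsqrt) simp
  have p3: "0 < real L ^ 2 + 3" by (intro add_nonneg_pos) auto
  have c0: "0 < c" unfolding c_def using Lr p3 by (intro mult_pos_pos divide_pos_pos) auto
  have q: "real L / (8 * sqrt (real L ^ 2 + 3)) \<le> 1"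
    using s3 Lr p3 by (simp add: divide_le_eq)
  have hL1: "(1/2::real)^L \<le> 1" by (simp add: power_le_one)
  have c1: "c \<le> (1/2)^L" unfolding c_def by (rule mult_left_le[OF q]) simp
  have Adiag: "Ag \<alpha> (0 + i) (0 + int i)" for i
  proof (cases "i = 0")
    case False
    then have "1 \<le> real i" by simp
    then have "real i powr \<alpha> \<le> real i powr 1" using a by (intro powr_mono) auto
    then show ?thesis using False by (simp add: Ag_def)
  qed (simp add: Ag_def)
  have main: "c / sqrt (real n) \<le> KE (Ag \<alpha>) (\<lambda>_. 1) n 0 0" if n: "1 \<le> n" for n
  proof (cases "n < L")
    case True
    have "(1/2)^n * KE (Ag \<alpha>) (\<lambda>_. 1) 0 (0 + n) (0 + int n) \<le> KE (Ag \<alpha>) (\<lambda>_. 1) (n + 0) 0 0"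
      using Adiag by (intro KE_prefix) auto
    moreover have "KE (Ag \<alpha>) (\<lambda>_. 1) 0 (0 + n) (0 + int n) = 1" using Adiag[of n] by simp
    ultimately have "(1/2)^n \<le> KE (Ag \<alpha>) (\<lambda>_. 1) n 0 0" by simp
    moreover have "(1/2::real)^L \<le> (1/2)^n" using True by (intro power_decreasing) auto
    moreover have "c / sqrt (real n) \<le> c" using c0 n by (simp add: divide_le_eq)
    ultimately show ?thesis using c1 by linarith
  next
    case False
    define m where "m = n - L"
    have nm: "n = L + m" using False by (simp add: m_def)
    have "(1/2)^L * KE (Ag \<alpha>) (\<lambda>_. 1) m (0 + L) (0 + int L) \<le> KE (Ag \<alpha>) (\<lambda>_. 1) (L + m) 0 0"
      using Adiag by (intro KE_prefix) auto
    then have p1: "(1/2)^L * KE (Ag \<alpha>) (\<lambda>_. 1) m L (int L) \<le> KE (Ag \<alpha>) (\<lambda>_. 1) n 0 0"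
      using nm by simp
    have "KE (Gb \<beta>) (\<lambda>_. 1) m L (int L) \<le> KE (Ag \<alpha>) (\<lambda>_. 1) m L (int L)"
    proof (rule KE_mono_A_from)
      fix t' x assume t': "L \<le> t'" and g: "Gb \<beta> t' x"
      have "1 \<le> real t'" using t' L by simp
      then have "real t' powr \<alpha> \<le> real t' powr \<beta>" using b by (intro powr_mono) auto
      then show "Ag \<alpha> t' x" using g by (auto simp: Gb_def Ag_def)
    qed simp
    moreover have "real L / (8 * sqrt (real L ^ 2 + 3 * real m)) \<le> KE (Gb \<beta>) (\<lambda>_. 1) m L (int L)"
      by (rule core_lower[OF L b(1,2) hL])
    moreover have "real L / (8 * (sqrt (real L ^ 2 + 3) * sqrt (real n))) \<le> real L / (8 * sqrt (real L ^ 2 + 3 * real m))"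
    proof -
      have a1: "real L ^ 2 * 1 \<le> real L ^ 2 * real n" using n by (intro mult_left_mono) auto
      have a2: "real m \<le> real n" using nm by simp
      have "(real L ^ 2 + 3) * real n = real L ^ 2 * real n + 3 * real n" by (simp add: distrib_right)
      then have "real L ^ 2 + 3 * real m \<le> (real L ^ 2 + 3) * real n" using a1 a2 by linarith
      then have sl: "sqrt (real L ^ 2 + 3 * real m) \<le> sqrt (real L ^ 2 + 3) * sqrt (real n)"
        by (simp add: real_sqrt_mult[symmetric])
      have "0 < real L ^ 2 + 3 * real m" using Lr by (intro add_pos_nonneg) auto
      then have sp: "0 < sqrt (real L ^ 2 + 3 * real m)" by (rule real_sqrt_gt_zero)
      have sn: "0 < sqrt (real n)" using n by simp
      have s3p: "0 < sqrt (real L ^ 2 + 3)" using p3 by simp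
      have "8 * sqrt (real L ^ 2 + 3 * real m) \<le> 8 * (sqrt (real L ^ 2 + 3) * sqrt (real n))" using sl by simp
      moreover have "0 < 8 * sqrt (real L ^ 2 + 3 * real m) * (8 * (sqrt (real L ^ 2 + 3) * sqrt (real n)))"
        using sp sn s3p by simp
      ultimately show ?thesis using Lr by (intro divide_left_mono) auto
    qed
    ultimately have "real L / (8 * (sqrt (real L ^ 2 + 3) * sqrt (real n))) \<le> KE (Ag \<alpha>) (\<lambda>_. 1) m L (int L)"
      by linarith
    then have "(1/2)^L * (real L / (8 * (sqrt (real L ^ 2 + 3) * sqrt (real n)))) \<le> (1/2)^L * KE (Ag \<alpha>) (\<lambda>_. 1) m L (int L)"
      by (rule mult_left_mono) simp
    then have "(1/2)^L * (real L / (8 * (sqrt (real L ^ 2 + 3) * sqrt (real n)))) \<le> KE (Ag \<alpha>) (\<lambda>_. 1) n 0 0"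
      using p1 by linarith
    moreover have "c / sqrt (real n) = (1/2)^L * (real L / (8 * (sqrt (real L ^ 2 + 3) * sqrt (real n))))"
      unfolding c_def by (simp add: field_simps)
    ultimately show ?thesis by simp
  qed
  show ?thesis using c0 c1 hL1 main by (intro exI[of _ c]) auto
qed

theorem lemma13:
  fixes M :: "'a measure" and X :: "nat \<Rightarrow> 'a \<Rightarrow> real" and \<alpha> :: real
  assumes "prob_space M"
    and "prob_space.indep_vars M (\<lambda>_. borel) X {1..}"
    and "\<And>i. i \<ge> 1 \<Longrightarrow> measure M {\<omega> \<in> space M. X i \<omega> = 1} = 1/2"
    and "\<And>i. i \<ge> 1 \<Longrightarrow> measure M {\<omega> \<in> space M. X i \<omega> = -1} = 1/2"
    and "\<alpha> < 1/2"
  shows "\<exists>c C. 0 < c \<and> c \<le> C \<and>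
    (\<forall>n::nat. n \<ge> 1 \<longrightarrow>
      c * real n powr (-1/2)
        \<le> measure M {\<omega> \<in> space M. \<forall>i\<in>{1..n}. Zsum X i \<omega> \<ge> real i powr \<alpha>}
      \<and> measure M {\<omega> \<in> space M. \<forall>i\<in>{1..n}. Zsum X i \<omega> \<ge> real i powr \<alpha>}
        \<le> C * real n powr (-1/2))"
proof -
  obtain c where c: "c > 0" "c \<le> 1" "\<And>n. n \<ge> 1 \<Longrightarrow> c / sqrt (real n) \<le> KE (Ag \<alpha>) (\<lambda>_. 1) n 0 0"
    using lower_KE[OF assms(5)] by blast
  have eq: "measure M {\<omega> \<in> space M. \<forall>i\<in>{1..n}. Zsum X i \<omega> \<ge> real i powr \<alpha>} = KE (Ag \<alpha>) (\<lambda>_. 1) n 0 0" for n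
  proof -
    have "Ag \<alpha> = (\<lambda>t y. t = 0 \<or> real t powr \<alpha> \<le> real_of_int y)" by (intro ext) (simp add: Ag_def)
    then show ?thesis using prob_eq_KE[OF assms(1-4), of n \<alpha>] by simp
  qed
  have pw: "real n powr (-1/2) = 1 / sqrt (real n)" if "n \<ge> 1" for n :: nat
  proof -
    have "real n powr (-1/2) = real n powr (- (1/2))" by simp
    also have "\<dots> = 1 / real n powr (1/2)" by (rule powr_minus_divide)
    also have "\<dots> = 1 / sqrt (real n)" using that by (simp add: powr_half_sqrt)
    finally show ?thesis .
  qed
  have both: "c * real n powr (-1/2) \<le> measure M {\<omega> \<in> space M. \<forall>i\<in>{1..n}. Zsum X i \<omega> \<ge> real i powr \<alpha>}
      \<and> measure M {\<omega> \<in> space M. \<forall>i\<in>{1..n}. Zsum X i \<omega> \<ge> real i powr \<alpha>} \<le> 1 * real n powr (-1/2)"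
    if n: "1 \<le> n" for n :: nat
  proof
    show "c * real n powr (-1/2) \<le> measure M {\<omega> \<in> space M. \<forall>i\<in>{1..n}. Zsum X i \<omega> \<ge> real i powr \<alpha>}"
      unfolding eq pw[OF n] using c(3)[OF n] by simp
    show "measure M {\<omega> \<in> space M. \<forall>i\<in>{1..n}. Zsum X i \<omega> \<ge> real i powr \<alpha>} \<le> 1 * real n powr (-1/2)"
      unfolding eq pw[OF n] using upper_KE[OF n] by simp
  qed
  show ?thesis using c(1,2) both by blast
qed



end
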